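(* Let $\alpha,\beta,\gamma,\Delta\in\mathbb{C}$ with $(\Delta,\beta)\neq(0,0)$. Consider extensions of conformal $\widetilde{\mathrm{SV}}$-modules $$0\to V(\alpha,\beta,\Delta)\to E\to\mathbb{C}c_\gamma\to0,$$ realized as $E=\mathbb{C}[\partial]v_\Delta\oplus\mathbb{C}c_\gamma$ (as vector spaces) with $\mathbb{C}[\partial]v_\Delta\cong V(\alpha,\beta,\Delta)$ a submodule and $$L_\lambda c_\gamma=f(\partial,\lambda)v_\Delta,\ M_\lambda c_\gamma=g(\partial,\lambda)v_\Delta,\ Y_\lambda c_\gamma=h(\partial,\lambda)v_\Delta,\ N_\lambda c_\gamma=k(\partial,\lambda)v_\Delta,\ \partial c_\gamma=\gamma c_\gamma+a(\partial)v_\Delta,$$ where $f,g,h,k\in\mathbb{C}[\partial,\lambda]$, $a\in\mathbb{C}[\partial]$. Nontrivial extensions of this form exist if and only if $\alpha+\gamma=0$, $\beta=0$ and $\Delta=1$. In this case $\dim_{\mathbb{C}}\mathrm{Ext}(\mathbb{C}c_{-\alpha},V(\alpha,0,1))=1$, and the only (up to a scalar) nontrivial extension is given by $g=h=k=0$ and $f(\partial,\lambda)=a(\partial)=a_0\in\mathbb{C}^*$.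
   Context: A conformal module over a Lie conformal algebra $R$ is a $\mathbb{C}[\partial]$-module $V$ with $a\mapsto a_\lambda\in\mathrm{End}_{\mathbb{C}}(V)\otimes\mathbb{C}[\lambda]$ satisfying $[a_\lambda,b_\mu]=[a_\lambda b]_{\lambda+\mu}$ and $(\partial a)_\lambda=[\partial,a_\lambda]=-\lambda a_\lambda$. $\widetilde{\mathrm{SV}}$ is the Lie conformal algebra that is the free $\mathbb{C}[\partial]$-module with basis $L,M,Y,N$ whose nonzero $\lambda$-brackets (up to skew-symmetry) are $[L_\lambda L]=(\partial+2\lambda)L$, $[L_\lambda Y]=(\partial+\tfrac32\lambda)Y$, $[L_\lambda M]=(\partial+\lambda)M$, $[Y_\lambda Y]=(\partial+2\lambda)M$, $[L_\lambda N]=(\partial+\lambda)N$, $[N_\lambda M]=2M$, $[N_\lambda Y]=Y$. $V(\alpha,\beta,\Delta)=\mathbb{C}[\partial]v_\Delta$ with $L_\lambda v_\Delta=(\partial+\alpha+\Delta\lambda)v_\Delta$, $N_\lambda v_\Delta=\beta v_\Delta$, $M_\lambda v_\Delta=Y_\lambda v_\Delta=0$. $\mathbb{C}c_\gamma$ is the one-dimensional module with $\partial c_\gamma=\gamma c_\gamma$ and zero $\lambda$-actions. An extension of $W$ by $V$ is an exact sequence $0\to V\to E\to W\to0$ of conformal modules; equivalence via a module map of middle terms compatible with identities; trivial means equivalent to the direct sum. $\mathrm{Ext}(W,V)$ is the space of extension cocycles modulo coboundaries. *)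

theory Defs
  imports "HOL-Computational_Algebra.Polynomial"
begin

datatype gen = GL | GM | GY | GN

text \<open>Listed brackets [a_lambda b] = sum_c Q(a,b,c)(d,lambda) c, where d stands for the
  derivation of the algebra.  br0 a b c d l is the coefficient Q(a,b,c) evaluated at d, l.\<close>
fun br0 :: "gen \<Rightarrow> gen \<Rightarrow> gen \<Rightarrow> complex \<Rightarrow> complex \<Rightarrow> complex" where
  "br0 GL GL GL d l = d + 2 * l"
| "br0 GL GY GY d l = d + 3/2 * l"
| "br0 GL GM GM d l = d + l"
| "br0 GY GY GM d l = d + 2 * l"
| "br0 GL GN GN d l = d + l"
| "br0 GN GM GM d l = 2"
| "br0 GN GY GY d l = 1"
| "br0 _ _ _ d l = 0"

definition listed :: "gen \<Rightarrow> gen \<Rightarrow> bool" where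
  "listed a b \<longleftrightarrow> (a, b) \<in> {(GL,GL),(GL,GY),(GL,GM),(GY,GY),(GL,GN),(GN,GM),(GN,GY)}"

text \<open>All brackets, the unlisted ones obtained by skew-symmetry
  [b_lambda a] = - [a_(-lambda-d) b]; all other brackets are zero.\<close>
definition lc_br :: "gen \<Rightarrow> gen \<Rightarrow> gen \<Rightarrow> complex \<Rightarrow> complex \<Rightarrow> complex" where
  "lc_br a b c d l =
     (if listed a b then br0 a b c d l
      else if listed b a then - br0 b a c d (- l - d) else 0)"

section \<open>The underlying space E = C[d] v \<oplus> C c (pairs (p, z) meaning p(d) v + z c)\<close>

type_synonym E = "complex poly \<times> complex"

definition eadd :: "E \<Rightarrow> E \<Rightarrow> E" where "eadd u w = (fst u + fst w, snd u + snd w)"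
definition esub :: "E \<Rightarrow> E \<Rightarrow> E" where "esub u w = (fst u - fst w, snd u - snd w)"
definition esc :: "complex \<Rightarrow> E \<Rightarrow> E" where "esc c w = (smult c (fst w), c * snd w)"

text \<open>Conformal module over SV-tilde on E, with lambda evaluated at complex numbers
  (a polynomial identity in lambda, mu holds iff it holds for all complex values).
  (1) a_lambda w is polynomial in lambda;
  (2) [a_lambda, b_mu] = [a_lambda b]_(lambda+mu), where (d^n c)_(lambda+mu) = (-(lambda+mu))^n c_(lambda+mu);
  (3) [d, a_lambda] = - lambda a_lambda.\<close>
definition conformal_module :: "(E \<Rightarrow> E) \<Rightarrow> (gen \<Rightarrow> complex \<Rightarrow> E \<Rightarrow> E) \<Rightarrow> bool" where
  "conformal_module D act \<longleftrightarrow>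
     (\<forall>u w. D (eadd u w) = eadd (D u) (D w)) \<and> (\<forall>c w. D (esc c w) = esc c (D w)) \<and>
     (\<forall>a l u w. act a l (eadd u w) = eadd (act a l u) (act a l w)) \<and>
     (\<forall>a l c w. act a l (esc c w) = esc c (act a l w)) \<and>
     (\<forall>a w. \<exists>P Q. \<forall>l. act a l w = (poly P [:l:], poly Q l)) \<and>
     (\<forall>a b l m w. esub (act a l (act b m w)) (act b m (act a l w)) =
        eadd (esc (lc_br a b GL (-(l+m)) l) (act GL (l+m) w))
         (eadd (esc (lc_br a b GM (-(l+m)) l) (act GM (l+m) w))
          (eadd (esc (lc_br a b GY (-(l+m)) l) (act GY (l+m) w))
                (esc (lc_br a b GN (-(l+m)) l) (act GN (l+m) w))))) \<and>
     (\<forall>a l w. esub (D (act a l w)) (act a l (D w)) = esc (- l) (act a l w))"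

text \<open>Bivariate polynomials in C[d, lambda] are represented as complex poly poly:
  the outer variable is lambda, the coefficients are polynomials in d.
  Evaluation at lambda = l is  poly f [:l:]  (a polynomial in d).\<close>
record ext_data =
  dL :: "complex poly poly"
  dM :: "complex poly poly"
  dY :: "complex poly poly"
  dN :: "complex poly poly"
  dA :: "complex poly"

definition data_zero :: ext_data where
  "data_zero = \<lparr>dL = 0, dM = 0, dY = 0, dN = 0, dA = 0\<rparr>"

definition data_sub :: "ext_data \<Rightarrow> ext_data \<Rightarrow> ext_data" where
  "data_sub x y = \<lparr>dL = dL x - dL y, dM = dM x - dM y, dY = dY x - dY y,
                   dN = dN x - dN y, dA = dA x - dA y\<rparr>"

definition data_smult :: "complex \<Rightarrow> ext_data \<Rightarrow> ext_data" where
  "data_smult c x = \<lparr>dL = smult [:c:] (dL x), dM = smult [:c:] (dM x), dY = smult [:c:] (dY x),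
                     dN = smult [:c:] (dN x), dA = smult c (dA x)\<rparr>"

text \<open>Action of the generators on v_Delta in V(alpha,beta,Delta), as a polynomial in d.\<close>
fun vphi :: "complex \<Rightarrow> complex \<Rightarrow> complex \<Rightarrow> gen \<Rightarrow> complex \<Rightarrow> complex poly" where
  "vphi \<alpha> \<beta> \<Delta> GL l = [:\<alpha> + \<Delta> * l, 1:]"
| "vphi \<alpha> \<beta> \<Delta> GN l = [:\<beta>:]"
| "vphi \<alpha> \<beta> \<Delta> GM l = 0"
| "vphi \<alpha> \<beta> \<Delta> GY l = 0"

fun dcoef :: "ext_data \<Rightarrow> gen \<Rightarrow> complex poly poly" where
  "dcoef x GL = dL x" | "dcoef x GM = dM x" | "dcoef x GY = dY x" | "dcoef x GN = dN x"

definition ext_D :: "complex \<Rightarrow> ext_data \<Rightarrow> E \<Rightarrow> E" where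
  "ext_D \<gamma> x w = ([:0, 1:] * fst w + smult (snd w) (dA x), \<gamma> * snd w)"

definition ext_act :: "complex \<Rightarrow> complex \<Rightarrow> complex \<Rightarrow> ext_data \<Rightarrow> gen \<Rightarrow> complex \<Rightarrow> E \<Rightarrow> E" where
  "ext_act \<alpha> \<beta> \<Delta> x X l w =
     (pcompose (fst w) [:l, 1:] * vphi \<alpha> \<beta> \<Delta> X l + smult (snd w) (poly (dcoef x X) [:l:]), 0)"

definition is_cocycle :: "complex \<Rightarrow> complex \<Rightarrow> complex \<Rightarrow> complex \<Rightarrow> ext_data \<Rightarrow> bool" where
  "is_cocycle \<alpha> \<beta> \<Delta> \<gamma> x \<longleftrightarrow> conformal_module (ext_D \<gamma> x) (ext_act \<alpha> \<beta> \<Delta> x)"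

text \<open>Equivalence of extensions: a module map of the middle terms which is the identity
  on the submodule V and induces the identity on the quotient C c_gamma.\<close>
definition ext_equiv :: "complex \<Rightarrow> complex \<Rightarrow> complex \<Rightarrow> complex \<Rightarrow> ext_data \<Rightarrow> ext_data \<Rightarrow> bool" where
  "ext_equiv \<alpha> \<beta> \<Delta> \<gamma> x y \<longleftrightarrow>
     (\<exists>\<phi> :: E \<Rightarrow> E.
        (\<forall>u w. \<phi> (eadd u w) = eadd (\<phi> u) (\<phi> w)) \<and> (\<forall>c w. \<phi> (esc c w) = esc c (\<phi> w)) \<and>
        (\<forall>p. \<phi> (p, 0) = (p, 0)) \<and> (\<forall>w. snd (\<phi> w) = snd w) \<and>
        (\<forall>w. \<phi> (ext_D \<gamma> x w) = ext_D \<gamma> y (\<phi> w)) \<and>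
        (\<forall>X l w. \<phi> (ext_act \<alpha> \<beta> \<Delta> x X l w) = ext_act \<alpha> \<beta> \<Delta> y X l (\<phi> w)))"

definition is_trivial :: "complex \<Rightarrow> complex \<Rightarrow> complex \<Rightarrow> complex \<Rightarrow> ext_data \<Rightarrow> bool" where
  "is_trivial \<alpha> \<beta> \<Delta> \<gamma> x \<longleftrightarrow> ext_equiv \<alpha> \<beta> \<Delta> \<gamma> x data_zero"

definition is_coboundary :: "complex \<Rightarrow> complex \<Rightarrow> complex \<Rightarrow> complex \<Rightarrow> ext_data \<Rightarrow> bool" where
  "is_coboundary \<alpha> \<beta> \<Delta> \<gamma> x \<longleftrightarrow> is_cocycle \<alpha> \<beta> \<Delta> \<gamma> x \<and> is_trivial \<alpha> \<beta> \<Delta> \<gamma> x"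

text \<open>dim Ext = 1: the quotient (cocycles / coboundaries) is spanned by one non-zero class.\<close>
definition Ext_dim_one :: "complex \<Rightarrow> complex \<Rightarrow> complex \<Rightarrow> complex \<Rightarrow> bool" where
  "Ext_dim_one \<alpha> \<beta> \<Delta> \<gamma> \<longleftrightarrow>
     (\<exists>w. is_cocycle \<alpha> \<beta> \<Delta> \<gamma> w \<and> \<not> is_coboundary \<alpha> \<beta> \<Delta> \<gamma> w \<and>
        (\<forall>x. is_cocycle \<alpha> \<beta> \<Delta> \<gamma> x \<longrightarrow>
             (\<exists>c. is_coboundary \<alpha> \<beta> \<Delta> \<gamma> (data_sub x (data_smult c w)))))"

definition std_data :: "complex \<Rightarrow> ext_data" where
  "std_data a0 = \<lparr>dL = [:[:a0:]:], dM = 0, dY = 0, dN = 0, dA = [:a0:]\<rparr>"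

end

theory Submission imports Defs begin

lemma peq: fixes p q :: "complex poly" assumes "\<And>x. poly p x = poly q x" shows "p = q"
proof -
  have "poly p = poly q" by (rule ext) (rule assms)
  thus ?thesis by (metis poly_eq_poly_eq_iff)
qed

definition Aop :: "complex \<Rightarrow> complex \<Rightarrow> complex \<Rightarrow> gen \<Rightarrow> complex \<Rightarrow> complex poly \<Rightarrow> complex poly" where
  "Aop \<alpha> \<beta> \<Delta> X l p = pcompose p [:l,1:] * vphi \<alpha> \<beta> \<Delta> X l"

definition FX :: "ext_data \<Rightarrow> gen \<Rightarrow> complex \<Rightarrow> complex poly" where
  "FX x X l = poly (dcoef x X) [:l:]"

lemma ext_act_eq: "ext_act \<alpha> \<beta> \<Delta> x X l w = (Aop \<alpha> \<beta> \<Delta> X l (fst w) + smult (snd w) (FX x X l), 0)"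
  by (simp add: ext_act_def Aop_def FX_def)

lemma Aop_add: "Aop \<alpha> \<beta> \<Delta> X l (p + q) = Aop \<alpha> \<beta> \<Delta> X l p + Aop \<alpha> \<beta> \<Delta> X l q"
  by (simp add: Aop_def pcompose_add distrib_right)
lemma Aop_diff: "Aop \<alpha> \<beta> \<Delta> X l (p - q) = Aop \<alpha> \<beta> \<Delta> X l p - Aop \<alpha> \<beta> \<Delta> X l q"
  by (simp add: Aop_def pcompose_diff left_diff_distrib)
lemma Aop_smult: "Aop \<alpha> \<beta> \<Delta> X l (smult c p) = smult c (Aop \<alpha> \<beta> \<Delta> X l p)"
  by (simp add: Aop_def pcompose_smult)
lemma Aop_0[simp]: "Aop \<alpha> \<beta> \<Delta> X l 0 = 0"
  by (simp add: Aop_def)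

lemma pc_shift: "pcompose [:m, 1:] [:l, 1:] = [:l + m, 1::complex:]"
  by (rule peq) (simp add: poly_pcompose algebra_simps)

lemma vphi_id: "pcompose (vphi \<alpha> \<beta> \<Delta> b m) [:l,1:] * vphi \<alpha> \<beta> \<Delta> a l
    - pcompose (vphi \<alpha> \<beta> \<Delta> a l) [:m,1:] * vphi \<alpha> \<beta> \<Delta> b m =
   smult (lc_br a b GL (-(l+m)) l) (vphi \<alpha> \<beta> \<Delta> GL (l+m)) +
   (smult (lc_br a b GM (-(l+m)) l) (vphi \<alpha> \<beta> \<Delta> GM (l+m)) +
   (smult (lc_br a b GY (-(l+m)) l) (vphi \<alpha> \<beta> \<Delta> GY (l+m)) +
    smult (lc_br a b GN (-(l+m)) l) (vphi \<alpha> \<beta> \<Delta> GN (l+m))))"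
  apply (rule peq)
  apply (cases a; cases b)
  apply (simp_all add: lc_br_def listed_def poly_pcompose)
  apply (simp_all add: algebra_simps)
  done

lemma VB: "Aop \<alpha> \<beta> \<Delta> a l (Aop \<alpha> \<beta> \<Delta> b m p) - Aop \<alpha> \<beta> \<Delta> b m (Aop \<alpha> \<beta> \<Delta> a l p) =
   smult (lc_br a b GL (-(l+m)) l) (Aop \<alpha> \<beta> \<Delta> GL (l+m) p) +
   (smult (lc_br a b GM (-(l+m)) l) (Aop \<alpha> \<beta> \<Delta> GM (l+m) p) +
   (smult (lc_br a b GY (-(l+m)) l) (Aop \<alpha> \<beta> \<Delta> GY (l+m) p) +
    smult (lc_br a b GN (-(l+m)) l) (Aop \<alpha> \<beta> \<Delta> GN (l+m) p)))"
proof -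
  let ?P = "pcompose p [:l+m,1:]"
  have "Aop \<alpha> \<beta> \<Delta> a l (Aop \<alpha> \<beta> \<Delta> b m p) - Aop \<alpha> \<beta> \<Delta> b m (Aop \<alpha> \<beta> \<Delta> a l p)
     = ?P * (pcompose (vphi \<alpha> \<beta> \<Delta> b m) [:l,1:] * vphi \<alpha> \<beta> \<Delta> a l
    - pcompose (vphi \<alpha> \<beta> \<Delta> a l) [:m,1:] * vphi \<alpha> \<beta> \<Delta> b m)"
    unfolding Aop_def pcompose_mult pcompose_assoc[symmetric] pc_shift
    by (simp add: algebra_simps)
  also have "\<dots> = smult (lc_br a b GL (-(l+m)) l) (Aop \<alpha> \<beta> \<Delta> GL (l+m) p) +
   (smult (lc_br a b GM (-(l+m)) l) (Aop \<alpha> \<beta> \<Delta> GM (l+m) p) +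
   (smult (lc_br a b GY (-(l+m)) l) (Aop \<alpha> \<beta> \<Delta> GY (l+m) p) +
    smult (lc_br a b GN (-(l+m)) l) (Aop \<alpha> \<beta> \<Delta> GN (l+m) p)))" unfolding vphi_id by (rule peq) (simp add: Aop_def algebra_simps)
  finally show ?thesis .
qed

lemma VD: "[:0,1:] * Aop \<alpha> \<beta> \<Delta> X l p - Aop \<alpha> \<beta> \<Delta> X l ([:0,1:] * p) = smult (-l) (Aop \<alpha> \<beta> \<Delta> X l p)"
  by (rule peq) (simp add: Aop_def poly_pcompose algebra_simps)

fun PhiX :: "complex \<Rightarrow> complex \<Rightarrow> complex \<Rightarrow> gen \<Rightarrow> complex poly poly" where
  "PhiX \<alpha> \<beta> \<Delta> GL = [:[:\<alpha>,1:],[:\<Delta>:]:]"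
| "PhiX \<alpha> \<beta> \<Delta> GN = [:[:\<beta>:]:]"
| "PhiX \<alpha> \<beta> \<Delta> GM = 0"
| "PhiX \<alpha> \<beta> \<Delta> GY = 0"

lemma PhiX_eval: "poly (PhiX \<alpha> \<beta> \<Delta> X) [:l:] = vphi \<alpha> \<beta> \<Delta> X l"
  by (cases X) (simp_all add: mult.commute)

definition Pshift :: "complex poly \<Rightarrow> complex poly poly" where
  "Pshift p = pcompose (map_poly (\<lambda>c. [:c:]) p) [:[:0,1:],1:]"

lemma Pshift_eval: "poly (Pshift p) [:l:] = pcompose p [:l,1:]"
proof -
  have "poly [:[:0,1:],1:] [:l:] = [:l,1:]" by simp
  hence "poly (Pshift p) [:l:] = poly (map_poly (\<lambda>c. [:c:]) p) [:l,1:]"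
    by (simp add: Pshift_def poly_pcompose)
  thus ?thesis by (simp add: pcompose_altdef)
qed


lemma diff_to_add: "(x::'a::ab_group_add) - y = r \<Longrightarrow> x = y + r"
  by (simp add: algebra_simps)
lemma diff_to_add2: "(u::'a::ab_group_add) - (A + g) = r \<Longrightarrow> A = u - g - r"
  by (simp add: algebra_simps)

definition Bc :: "complex \<Rightarrow> complex \<Rightarrow> complex \<Rightarrow> ext_data \<Rightarrow> bool" where
  "Bc \<alpha> \<beta> \<Delta> x \<longleftrightarrow> (\<forall>a b l m.
     Aop \<alpha> \<beta> \<Delta> a l (FX x b m) - Aop \<alpha> \<beta> \<Delta> b m (FX x a l) =
   smult (lc_br a b GL (-(l+m)) l) (FX x GL (l+m)) +
   (smult (lc_br a b GM (-(l+m)) l) (FX x GM (l+m)) +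
   (smult (lc_br a b GY (-(l+m)) l) (FX x GY (l+m)) +
    smult (lc_br a b GN (-(l+m)) l) (FX x GN (l+m)))))"

definition Dc :: "complex \<Rightarrow> complex \<Rightarrow> complex \<Rightarrow> complex \<Rightarrow> ext_data \<Rightarrow> bool" where
  "Dc \<alpha> \<beta> \<Delta> \<gamma> x \<longleftrightarrow> (\<forall>X l.
     [:0,1:] * FX x X l - (Aop \<alpha> \<beta> \<Delta> X l (dA x) + smult \<gamma> (FX x X l)) = smult (-l) (FX x X l))"

lemma cocycle_nec:
  assumes "is_cocycle \<alpha> \<beta> \<Delta> \<gamma> x"
  shows "Bc \<alpha> \<beta> \<Delta> x \<and> Dc \<alpha> \<beta> \<Delta> \<gamma> x"
proof -
  from assms have B: "\<And>a b l m w. esub (ext_act \<alpha> \<beta> \<Delta> x a l (ext_act \<alpha> \<beta> \<Delta> x b m w)) (ext_act \<alpha> \<beta> \<Delta> x b m (ext_act \<alpha> \<beta> \<Delta> x a l w)) =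
        eadd (esc (lc_br a b GL (-(l+m)) l) (ext_act \<alpha> \<beta> \<Delta> x GL (l+m) w))
         (eadd (esc (lc_br a b GM (-(l+m)) l) (ext_act \<alpha> \<beta> \<Delta> x GM (l+m) w))
          (eadd (esc (lc_br a b GY (-(l+m)) l) (ext_act \<alpha> \<beta> \<Delta> x GY (l+m) w))
                (esc (lc_br a b GN (-(l+m)) l) (ext_act \<alpha> \<beta> \<Delta> x GN (l+m) w))))"
    and D: "\<And>a l w. esub (ext_D \<gamma> x (ext_act \<alpha> \<beta> \<Delta> x a l w)) (ext_act \<alpha> \<beta> \<Delta> x a l (ext_D \<gamma> x w)) = esc (- l) (ext_act \<alpha> \<beta> \<Delta> x a l w)"
    unfolding is_cocycle_def conformal_module_def by blast+
  have "Bc \<alpha> \<beta> \<Delta> x"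
    unfolding Bc_def
  proof (intro allI)
    fix a b l m
    show "Aop \<alpha> \<beta> \<Delta> a l (FX x b m) - Aop \<alpha> \<beta> \<Delta> b m (FX x a l) =
   smult (lc_br a b GL (-(l+m)) l) (FX x GL (l+m)) +
   (smult (lc_br a b GM (-(l+m)) l) (FX x GM (l+m)) +
   (smult (lc_br a b GY (-(l+m)) l) (FX x GY (l+m)) +
    smult (lc_br a b GN (-(l+m)) l) (FX x GN (l+m))))"
      using arg_cong[OF B[of a l b m "(0,1)"], of fst]
      by (simp add: ext_act_eq esub_def eadd_def esc_def)
  qed
  moreover have "Dc \<alpha> \<beta> \<Delta> \<gamma> x"
    unfolding Dc_def
  proof (intro allI)
    fix X l
    show "[:0,1:] * FX x X l - (Aop \<alpha> \<beta> \<Delta> X l (dA x) + smult \<gamma> (FX x X l)) = smult (-l) (FX x X l)"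
      using arg_cong[OF D[of X l "(0,1)"], of fst]
      by (simp add: ext_act_eq esub_def eadd_def esc_def ext_D_def)
  qed
  ultimately show ?thesis by blast
qed

lemma cocycle_suff:
  assumes B: "Bc \<alpha> \<beta> \<Delta> x" and D: "Dc \<alpha> \<beta> \<Delta> \<gamma> x"
  shows "is_cocycle \<alpha> \<beta> \<Delta> \<gamma> x"
  unfolding is_cocycle_def conformal_module_def
proof (intro conjI allI)
  fix u w show "ext_D \<gamma> x (eadd u w) = eadd (ext_D \<gamma> x u) (ext_D \<gamma> x w)"
    by (simp add: ext_D_def eadd_def algebra_simps smult_add_left)
next
  fix c w show "ext_D \<gamma> x (esc c w) = esc c (ext_D \<gamma> x w)"
    by (simp add: ext_D_def esc_def smult_add_right)
next
  fix a l u w show "ext_act \<alpha> \<beta> \<Delta> x a l (eadd u w) = eadd (ext_act \<alpha> \<beta> \<Delta> x a l u) (ext_act \<alpha> \<beta> \<Delta> x a l w)"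
    by (simp add: ext_act_eq eadd_def Aop_add smult_add_left)
next
  fix a l c w show "ext_act \<alpha> \<beta> \<Delta> x a l (esc c w) = esc c (ext_act \<alpha> \<beta> \<Delta> x a l w)"
    by (simp add: ext_act_eq esc_def Aop_smult smult_add_right)
next
  fix a w
  show "\<exists>P Q. \<forall>l. ext_act \<alpha> \<beta> \<Delta> x a l w = (poly P [:l:], poly Q l)"
  proof (intro exI allI)
    fix l
    show "ext_act \<alpha> \<beta> \<Delta> x a l w = (poly (Pshift (fst w) * PhiX \<alpha> \<beta> \<Delta> a + smult [:snd w:] (dcoef x a)) [:l:], poly 0 l)"
      by (simp add: ext_act_eq Pshift_eval PhiX_eval Aop_def FX_def)
  qed
next
  fix a b :: gen and l m :: complex and w :: E
  obtain p z where w: "w = (p, z)" by (cases w)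
  have VB': "Aop \<alpha> \<beta> \<Delta> a l (Aop \<alpha> \<beta> \<Delta> b m p) = Aop \<alpha> \<beta> \<Delta> b m (Aop \<alpha> \<beta> \<Delta> a l p) +
   (smult (lc_br a b GL (-(l+m)) l) (Aop \<alpha> \<beta> \<Delta> GL (l+m) p) +
   (smult (lc_br a b GM (-(l+m)) l) (Aop \<alpha> \<beta> \<Delta> GM (l+m) p) +
   (smult (lc_br a b GY (-(l+m)) l) (Aop \<alpha> \<beta> \<Delta> GY (l+m) p) +
    smult (lc_br a b GN (-(l+m)) l) (Aop \<alpha> \<beta> \<Delta> GN (l+m) p))))"
    using VB[of \<alpha> \<beta> \<Delta> a l b m p] by (simp add: algebra_simps)
  have B': "Aop \<alpha> \<beta> \<Delta> a l (FX x b m) = Aop \<alpha> \<beta> \<Delta> b m (FX x a l) +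
   (smult (lc_br a b GL (-(l+m)) l) (FX x GL (l+m)) +
   (smult (lc_br a b GM (-(l+m)) l) (FX x GM (l+m)) +
   (smult (lc_br a b GY (-(l+m)) l) (FX x GY (l+m)) +
    smult (lc_br a b GN (-(l+m)) l) (FX x GN (l+m)))))"
    by (rule diff_to_add) (use B in \<open>simp add: Bc_def\<close>)
  show "esub (ext_act \<alpha> \<beta> \<Delta> x a l (ext_act \<alpha> \<beta> \<Delta> x b m w)) (ext_act \<alpha> \<beta> \<Delta> x b m (ext_act \<alpha> \<beta> \<Delta> x a l w)) =
        eadd (esc (lc_br a b GL (-(l+m)) l) (ext_act \<alpha> \<beta> \<Delta> x GL (l+m) w))
         (eadd (esc (lc_br a b GM (-(l+m)) l) (ext_act \<alpha> \<beta> \<Delta> x GM (l+m) w))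
          (eadd (esc (lc_br a b GY (-(l+m)) l) (ext_act \<alpha> \<beta> \<Delta> x GY (l+m) w))
                (esc (lc_br a b GN (-(l+m)) l) (ext_act \<alpha> \<beta> \<Delta> x GN (l+m) w))))"
    unfolding w
    by (simp add: ext_act_eq esub_def eadd_def esc_def Aop_add Aop_smult VB' B' smult_add_right algebra_simps)
next
  fix a :: gen and l :: complex and w :: E
  obtain p z where w: "w = (p, z)" by (cases w)
  have VD': "Aop \<alpha> \<beta> \<Delta> a l (pCons 0 p) = pCons 0 (Aop \<alpha> \<beta> \<Delta> a l p) + smult l (Aop \<alpha> \<beta> \<Delta> a l p)"
    using VD[of \<alpha> \<beta> \<Delta> a l p] by (simp add: algebra_simps)
  have D': "Aop \<alpha> \<beta> \<Delta> a l (dA x) = [:0,1:] * FX x a l - smult \<gamma> (FX x a l) - smult (-l) (FX x a l)"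
    by (rule diff_to_add2) (use D in \<open>simp add: Dc_def\<close>)
  show "esub (ext_D \<gamma> x (ext_act \<alpha> \<beta> \<Delta> x a l w)) (ext_act \<alpha> \<beta> \<Delta> x a l (ext_D \<gamma> x w)) = esc (- l) (ext_act \<alpha> \<beta> \<Delta> x a l w)"
    unfolding w
    by (simp add: ext_act_eq esub_def eadd_def esc_def ext_D_def Aop_add Aop_smult VD' D' smult_add_right smult_diff_right algebra_simps)
qed


lemma FX_zero[simp]: "FX data_zero X l = 0"
  by (cases X) (simp_all add: FX_def data_zero_def)

lemma triv_suff:
  assumes a: "dA x = [:-\<gamma>,1:] * q" and F: "\<And>X l. FX x X l = Aop \<alpha> \<beta> \<Delta> X l q"
  shows "is_trivial \<alpha> \<beta> \<Delta> \<gamma> x"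
  unfolding is_trivial_def ext_equiv_def
proof (rule exI[of _ "\<lambda>w. (fst w + smult (snd w) q, snd w)"], intro conjI allI)
  fix u w :: E show "(fst (eadd u w) + smult (snd (eadd u w)) q, snd (eadd u w)) =
     eadd (fst u + smult (snd u) q, snd u) (fst w + smult (snd w) q, snd w)"
    by (simp add: eadd_def smult_add_left algebra_simps)
next
  fix c and w :: E show "(fst (esc c w) + smult (snd (esc c w)) q, snd (esc c w)) = esc c (fst w + smult (snd w) q, snd w)"
    by (simp add: esc_def smult_add_right)
next
  fix w :: E
  show "(fst (ext_D \<gamma> x w) + smult (snd (ext_D \<gamma> x w)) q, snd (ext_D \<gamma> x w)) =
    ext_D \<gamma> data_zero (fst w + smult (snd w) q, snd w)"
    unfolding ext_D_def data_zero_def a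
    by (simp, rule peq, simp add: algebra_simps)
next
  fix X l and w :: E
  show "(fst (ext_act \<alpha> \<beta> \<Delta> x X l w) + smult (snd (ext_act \<alpha> \<beta> \<Delta> x X l w)) q, snd (ext_act \<alpha> \<beta> \<Delta> x X l w)) =
      ext_act \<alpha> \<beta> \<Delta> data_zero X l (fst w + smult (snd w) q, snd w)"
    by (simp add: ext_act_eq F Aop_add Aop_smult)
qed simp_all

lemma triv_nec:
  assumes "is_trivial \<alpha> \<beta> \<Delta> \<gamma> x"
  shows "poly (dA x) \<gamma> = 0"
proof -
  obtain \<phi> :: "E \<Rightarrow> E" where add: "\<And>u w. \<phi> (eadd u w) = eadd (\<phi> u) (\<phi> w)"
    and sc: "\<And>c w. \<phi> (esc c w) = esc c (\<phi> w)" and idv: "\<And>p. \<phi> (p, 0) = (p, 0)"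
    and sn: "\<And>w. snd (\<phi> w) = snd w"
    and D: "\<And>w. \<phi> (ext_D \<gamma> x w) = ext_D \<gamma> data_zero (\<phi> w)"
    using assms unfolding is_trivial_def ext_equiv_def by blast
  define q where "q = fst (\<phi> (0, 1))"
  have c: "\<phi> (0, 1) = (q, 1)" using sn[of "(0,1)"] unfolding q_def by (simp add: prod_eq_iff)
  have "\<phi> (dA x, \<gamma>) = \<phi> (eadd (dA x, 0) (esc \<gamma> (0, 1)))" by (simp add: eadd_def esc_def)
  also have "\<dots> = (dA x + smult \<gamma> q, \<gamma>)"
    by (simp only: add sc idv c) (simp add: eadd_def esc_def)
  finally have e1: "\<phi> (dA x, \<gamma>) = (dA x + smult \<gamma> q, \<gamma>)" .
  have "ext_D \<gamma> x (0, 1) = (dA x, \<gamma>)" by (simp add: ext_D_def)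
  hence "\<phi> (dA x, \<gamma>) = ext_D \<gamma> data_zero (q, 1)" using D[of "(0,1)"] c by simp
  hence "dA x + smult \<gamma> q = [:0,1:] * q" using e1 by (simp add: ext_D_def data_zero_def)
  hence "poly (dA x + smult \<gamma> q) \<gamma> = poly ([:0,1:] * q) \<gamma>" by simp
  thus ?thesis by simp
qed

lemma lemT:
  assumes D: "Dc \<alpha> \<beta> \<Delta> \<gamma> x" and z: "poly (dA x) \<gamma> = 0"
  shows "is_trivial \<alpha> \<beta> \<Delta> \<gamma> x"
proof -
  from z obtain q where a: "dA x = [:-\<gamma>,1:] * q" unfolding poly_eq_0_iff_dvd dvd_def by blast
  show ?thesis
  proof (rule triv_suff[OF a])
    fix X l
    have sh: "pcompose [:-\<gamma>,1:] [:l,1:] = [:l-\<gamma>,1:]" by (rule peq) (simp add: poly_pcompose)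
    have e: "[:0,1:] * FX x X l - (Aop \<alpha> \<beta> \<Delta> X l (dA x) + smult \<gamma> (FX x X l)) = smult (-l) (FX x X l)"
      using D by (simp add: Dc_def)
    have "Aop \<alpha> \<beta> \<Delta> X l (dA x) = [:l-\<gamma>,1:] * Aop \<alpha> \<beta> \<Delta> X l q"
      unfolding a Aop_def pcompose_mult sh by (simp add: algebra_simps)
    also have "Aop \<alpha> \<beta> \<Delta> X l (dA x) = [:0,1:] * FX x X l - smult \<gamma> (FX x X l) - smult (-l) (FX x X l)"
      by (rule diff_to_add2[OF e])
    also have "\<dots> = [:l-\<gamma>,1:] * FX x X l" by (rule peq) (simp add: algebra_simps)
    finally have "[:l-\<gamma>,1:] * FX x X l = [:l-\<gamma>,1:] * Aop \<alpha> \<beta> \<Delta> X l q" .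
    moreover have nz: "[:l-\<gamma>,1::complex:] \<noteq> 0" by simp
    ultimately show "FX x X l = Aop \<alpha> \<beta> \<Delta> X l q" using mult_left_cancel[OF nz] by blast
  qed
qed

lemma forward:
  assumes D: "Dc \<alpha> \<beta> \<Delta> \<gamma> x" and nz: "poly (dA x) \<gamma> \<noteq> 0"
  shows "\<alpha> + \<gamma> = 0 \<and> \<beta> = 0 \<and> \<Delta> = 1"
proof -
  have key: "poly (dA x) \<gamma> * poly (vphi \<alpha> \<beta> \<Delta> X l) (\<gamma> - l) = 0" for X l
  proof -
    have e: "[:0,1:] * FX x X l - (Aop \<alpha> \<beta> \<Delta> X l (dA x) + smult \<gamma> (FX x X l)) = smult (-l) (FX x X l)"
      using D by (simp add: Dc_def)
    have "poly ([:0,1:] * FX x X l - (Aop \<alpha> \<beta> \<Delta> X l (dA x) + smult \<gamma> (FX x X l))) (\<gamma> - l) = poly (smult (-l) (FX x X l)) (\<gamma> - l)"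
      using e by simp
    thus ?thesis by (simp add: Aop_def poly_pcompose algebra_simps)
  qed
  have k0: "poly (dA x) \<gamma> * (\<alpha> + \<gamma>) = 0" using key[of GL 0] by simp
  have k1: "poly (dA x) \<gamma> * (\<alpha> + \<Delta> + \<gamma> - 1) = 0" using key[of GL 1] by (simp add: algebra_simps)
  have k2: "poly (dA x) \<gamma> * \<beta> = 0" using key[of GN 0] by simp
  from k0 nz have "\<alpha> + \<gamma> = 0" by simp
  moreover from k1 nz have "\<alpha> + \<Delta> + \<gamma> - 1 = 0" by simp
  moreover from k2 nz have "\<beta> = 0" by simp
  ultimately show ?thesis by (simp add: algebra_simps)
qed


lemma FX_std: "FX (std_data a0) GL l = [:a0:]" "FX (std_data a0) GM l = 0"
  "FX (std_data a0) GY l = 0" "FX (std_data a0) GN l = 0"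
  by (simp_all add: FX_def std_data_def)
lemma dA_std: "dA (std_data a0) = [:a0:]" by (simp add: std_data_def)

lemma std_Bc: "Bc \<alpha> 0 1 (std_data a0)"
  unfolding Bc_def
  apply (intro allI)
  subgoal for a b l m
    apply (rule peq)
    apply (cases a; cases b)
    apply (simp_all add: FX_std lc_br_def listed_def Aop_def poly_pcompose)
    apply (simp_all add: algebra_simps)
    done
  done

lemma std_Dc: assumes "\<alpha> + \<gamma> = 0" shows "Dc \<alpha> 0 1 \<gamma> (std_data a0)"
proof -
  have g: "\<gamma> = - \<alpha>" using assms by algebra
  show ?thesis
  unfolding Dc_def g
  apply (intro allI)
  subgoal for X l
    apply (rule peq)
    apply (cases X)
    apply (simp_all add: FX_std Aop_def poly_pcompose dA_std)
    apply (simp add: algebra_simps)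
    done
  done
qed

lemma FX_sub: "FX (data_sub x y) X l = FX x X l - FX y X l"
  by (cases X) (simp_all add: FX_def data_sub_def)
lemma FX_smult: "FX (data_smult c y) X l = smult c (FX y X l)"
  by (cases X) (simp_all add: FX_def data_smult_def)
lemma dA_sub: "dA (data_sub x y) = dA x - dA y" by (simp add: data_sub_def)
lemma dA_smult: "dA (data_smult c y) = smult c (dA y)" by (simp add: data_smult_def)

lemma lin4: assumes "(a::'a::ab_group_add) - b = s" "a' - b' = t" shows "(a - a') - (b - b') = s - t"
  by (simp add: assms[symmetric] algebra_simps)
lemma linD: assumes "(u::'a::ab_group_add) - (A + g) = r" "u' - (A' + g') = r'"
  shows "(u - u') - ((A - A') + (g - g')) = r - r'"
  by (simp add: assms[symmetric] algebra_simps)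

lemma Bc_sub: assumes "Bc \<alpha> \<beta> \<Delta> x" "Bc \<alpha> \<beta> \<Delta> y" shows "Bc \<alpha> \<beta> \<Delta> (data_sub x y)"
  unfolding Bc_def
proof (intro allI)
  fix a b l m
  have "Aop \<alpha> \<beta> \<Delta> a l (FX (data_sub x y) b m) - Aop \<alpha> \<beta> \<Delta> b m (FX (data_sub x y) a l)
    = (Aop \<alpha> \<beta> \<Delta> a l (FX x b m) - Aop \<alpha> \<beta> \<Delta> a l (FX y b m)) - (Aop \<alpha> \<beta> \<Delta> b m (FX x a l) - Aop \<alpha> \<beta> \<Delta> b m (FX y a l))"
    by (simp add: FX_sub Aop_diff)
  also have "\<dots> = (smult (lc_br a b GL (-(l+m)) l) (FX x GL (l+m)) +
   (smult (lc_br a b GM (-(l+m)) l) (FX x GM (l+m)) +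
   (smult (lc_br a b GY (-(l+m)) l) (FX x GY (l+m)) +
    smult (lc_br a b GN (-(l+m)) l) (FX x GN (l+m))))) -
    (smult (lc_br a b GL (-(l+m)) l) (FX y GL (l+m)) +
   (smult (lc_br a b GM (-(l+m)) l) (FX y GM (l+m)) +
   (smult (lc_br a b GY (-(l+m)) l) (FX y GY (l+m)) +
    smult (lc_br a b GN (-(l+m)) l) (FX y GN (l+m)))))"
    by (rule lin4) (use assms in \<open>simp_all add: Bc_def\<close>)
  also have "\<dots> = smult (lc_br a b GL (-(l+m)) l) (FX (data_sub x y) GL (l+m)) +
   (smult (lc_br a b GM (-(l+m)) l) (FX (data_sub x y) GM (l+m)) +
   (smult (lc_br a b GY (-(l+m)) l) (FX (data_sub x y) GY (l+m)) +
    smult (lc_br a b GN (-(l+m)) l) (FX (data_sub x y) GN (l+m))))"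
    by (simp add: FX_sub smult_diff_right algebra_simps)
  finally show "Aop \<alpha> \<beta> \<Delta> a l (FX (data_sub x y) b m) - Aop \<alpha> \<beta> \<Delta> b m (FX (data_sub x y) a l) =
   smult (lc_br a b GL (-(l+m)) l) (FX (data_sub x y) GL (l+m)) +
   (smult (lc_br a b GM (-(l+m)) l) (FX (data_sub x y) GM (l+m)) +
   (smult (lc_br a b GY (-(l+m)) l) (FX (data_sub x y) GY (l+m)) +
    smult (lc_br a b GN (-(l+m)) l) (FX (data_sub x y) GN (l+m))))" .
qed

lemma Bc_smult: assumes "Bc \<alpha> \<beta> \<Delta> y" shows "Bc \<alpha> \<beta> \<Delta> (data_smult c y)"
  unfolding Bc_def
proof (intro allI)
  fix a b l m
  have "Aop \<alpha> \<beta> \<Delta> a l (FX (data_smult c y) b m) - Aop \<alpha> \<beta> \<Delta> b m (FX (data_smult c y) a l)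
    = smult c (Aop \<alpha> \<beta> \<Delta> a l (FX y b m) - Aop \<alpha> \<beta> \<Delta> b m (FX y a l))"
    by (simp add: FX_smult Aop_smult smult_diff_right)
  also have "\<dots> = smult c (smult (lc_br a b GL (-(l+m)) l) (FX y GL (l+m)) +
   (smult (lc_br a b GM (-(l+m)) l) (FX y GM (l+m)) +
   (smult (lc_br a b GY (-(l+m)) l) (FX y GY (l+m)) +
    smult (lc_br a b GN (-(l+m)) l) (FX y GN (l+m)))))"
    using assms by (simp add: Bc_def)
  also have "\<dots> = smult (lc_br a b GL (-(l+m)) l) (FX (data_smult c y) GL (l+m)) +
   (smult (lc_br a b GM (-(l+m)) l) (FX (data_smult c y) GM (l+m)) +
   (smult (lc_br a b GY (-(l+m)) l) (FX (data_smult c y) GY (l+m)) +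
    smult (lc_br a b GN (-(l+m)) l) (FX (data_smult c y) GN (l+m))))"
    by (simp add: FX_smult smult_add_right mult.commute)
  finally show "Aop \<alpha> \<beta> \<Delta> a l (FX (data_smult c y) b m) - Aop \<alpha> \<beta> \<Delta> b m (FX (data_smult c y) a l) =
   smult (lc_br a b GL (-(l+m)) l) (FX (data_smult c y) GL (l+m)) +
   (smult (lc_br a b GM (-(l+m)) l) (FX (data_smult c y) GM (l+m)) +
   (smult (lc_br a b GY (-(l+m)) l) (FX (data_smult c y) GY (l+m)) +
    smult (lc_br a b GN (-(l+m)) l) (FX (data_smult c y) GN (l+m))))" .
qed

lemma Dc_sub: assumes "Dc \<alpha> \<beta> \<Delta> \<gamma> x" "Dc \<alpha> \<beta> \<Delta> \<gamma> y" shows "Dc \<alpha> \<beta> \<Delta> \<gamma> (data_sub x y)"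
  unfolding Dc_def
proof (intro allI)
  fix X l
  have "[:0,1:] * FX (data_sub x y) X l - (Aop \<alpha> \<beta> \<Delta> X l (dA (data_sub x y)) + smult \<gamma> (FX (data_sub x y) X l))
    = ([:0,1:] * FX x X l - [:0,1:] * FX y X l) - ((Aop \<alpha> \<beta> \<Delta> X l (dA x) - Aop \<alpha> \<beta> \<Delta> X l (dA y)) + (smult \<gamma> (FX x X l) - smult \<gamma> (FX y X l)))"
    by (simp add: FX_sub dA_sub Aop_diff smult_diff_right right_diff_distrib)
  also have "\<dots> = smult (-l) (FX x X l) - smult (-l) (FX y X l)"
    by (rule linD) (use assms in \<open>simp_all add: Dc_def\<close>)
  also have "\<dots> = smult (-l) (FX (data_sub x y) X l)" by (simp add: FX_sub smult_diff_right)
  finally show "[:0,1:] * FX (data_sub x y) X l - (Aop \<alpha> \<beta> \<Delta> X l (dA (data_sub x y)) + smult \<gamma> (FX (data_sub x y) X l))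
    = smult (-l) (FX (data_sub x y) X l)" .
qed

lemma Dc_smult: assumes "Dc \<alpha> \<beta> \<Delta> \<gamma> y" shows "Dc \<alpha> \<beta> \<Delta> \<gamma> (data_smult c y)"
  unfolding Dc_def
proof (intro allI)
  fix X l
  have e: "[:0,1:] * FX y X l - (Aop \<alpha> \<beta> \<Delta> X l (dA y) + smult \<gamma> (FX y X l)) = smult (-l) (FX y X l)"
    using assms by (simp add: Dc_def)
  have "[:0,1:] * FX (data_smult c y) X l - (Aop \<alpha> \<beta> \<Delta> X l (dA (data_smult c y)) + smult \<gamma> (FX (data_smult c y) X l))
     = smult c ([:0,1:] * FX y X l - (Aop \<alpha> \<beta> \<Delta> X l (dA y) + smult \<gamma> (FX y X l)))"
    by (simp add: FX_smult dA_smult Aop_smult smult_diff_right smult_add_right mult.commute)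
  also have "\<dots> = smult (-l) (FX (data_smult c y) X l)" unfolding e by (simp add: FX_smult mult.commute)
  finally show "[:0,1:] * FX (data_smult c y) X l - (Aop \<alpha> \<beta> \<Delta> X l (dA (data_smult c y)) + smult \<gamma> (FX (data_smult c y) X l))
     = smult (-l) (FX (data_smult c y) X l)" .
qed

lemma cocycle_iff: "is_cocycle \<alpha> \<beta> \<Delta> \<gamma> x \<longleftrightarrow> Bc \<alpha> \<beta> \<Delta> x \<and> Dc \<alpha> \<beta> \<Delta> \<gamma> x"
  using cocycle_nec cocycle_suff by blast

lemma std_cocycle: assumes "\<alpha> + \<gamma> = 0" shows "is_cocycle \<alpha> 0 1 \<gamma> (std_data a0)"
  using std_Bc std_Dc[OF assms] cocycle_suff by blast

lemma std_nontriv: assumes "a0 \<noteq> 0" shows "\<not> is_trivial \<alpha> \<beta> \<Delta> \<gamma> (std_data a0)"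
  using triv_nec[of \<alpha> \<beta> \<Delta> \<gamma> "std_data a0"] assms by (auto simp: std_data_def)

theorem theorem5p4:
  fixes \<alpha> \<beta> \<gamma> \<Delta> :: complex
  assumes "(\<Delta>, \<beta>) \<noteq> (0, 0)"
  shows "((\<exists>x. is_cocycle \<alpha> \<beta> \<Delta> \<gamma> x \<and> \<not> is_trivial \<alpha> \<beta> \<Delta> \<gamma> x)
           \<longleftrightarrow> (\<alpha> + \<gamma> = 0 \<and> \<beta> = 0 \<and> \<Delta> = 1)) \<and>
         (\<alpha> + \<gamma> = 0 \<and> \<beta> = 0 \<and> \<Delta> = 1 \<longrightarrow>
           Ext_dim_one \<alpha> 0 1 (- \<alpha>) \<and>
           (\<forall>a0. a0 \<noteq> 0 \<longrightarrow> is_cocycle \<alpha> 0 1 (- \<alpha>) (std_data a0)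
                               \<and> \<not> is_trivial \<alpha> 0 1 (- \<alpha>) (std_data a0)) \<and>
           (\<forall>x. is_cocycle \<alpha> 0 1 (- \<alpha>) x \<and> \<not> is_trivial \<alpha> 0 1 (- \<alpha>) x \<longrightarrow>
                (\<exists>a0. a0 \<noteq> 0 \<and> is_coboundary \<alpha> 0 1 (- \<alpha>) (data_sub x (std_data a0)))))"
proof (intro conjI impI)
  show "(\<exists>x. is_cocycle \<alpha> \<beta> \<Delta> \<gamma> x \<and> \<not> is_trivial \<alpha> \<beta> \<Delta> \<gamma> x)
           \<longleftrightarrow> (\<alpha> + \<gamma> = 0 \<and> \<beta> = 0 \<and> \<Delta> = 1)"
  proof
    assume "\<exists>x. is_cocycle \<alpha> \<beta> \<Delta> \<gamma> x \<and> \<not> is_trivial \<alpha> \<beta> \<Delta> \<gamma> x"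
    then obtain x where c: "is_cocycle \<alpha> \<beta> \<Delta> \<gamma> x" and nt: "\<not> is_trivial \<alpha> \<beta> \<Delta> \<gamma> x" by blast
    from c have D: "Dc \<alpha> \<beta> \<Delta> \<gamma> x" using cocycle_nec by blast
    with nt lemT have "poly (dA x) \<gamma> \<noteq> 0" by blast
    with D show "\<alpha> + \<gamma> = 0 \<and> \<beta> = 0 \<and> \<Delta> = 1" by (rule forward)
  next
    assume h: "\<alpha> + \<gamma> = 0 \<and> \<beta> = 0 \<and> \<Delta> = 1"
    hence "is_cocycle \<alpha> \<beta> \<Delta> \<gamma> (std_data 1)" using std_cocycle by blast
    moreover have "\<not> is_trivial \<alpha> \<beta> \<Delta> \<gamma> (std_data 1)" by (rule std_nontriv) simp
    ultimately show "\<exists>x. is_cocycle \<alpha> \<beta> \<Delta> \<gamma> x \<and> \<not> is_trivial \<alpha> \<beta> \<Delta> \<gamma> x" by blast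
  qed
next
  assume h: "\<alpha> + \<gamma> = 0 \<and> \<beta> = 0 \<and> \<Delta> = 1"
  have ag: "\<alpha> + - \<alpha> = 0" by simp
  show "Ext_dim_one \<alpha> 0 1 (- \<alpha>)"
    unfolding Ext_dim_one_def
  proof (intro exI conjI allI impI)
    show "is_cocycle \<alpha> 0 1 (- \<alpha>) (std_data 1)" by (rule std_cocycle[OF ag])
    show "\<not> is_coboundary \<alpha> 0 1 (- \<alpha>) (std_data 1)"
      unfolding is_coboundary_def using std_nontriv[of 1] by simp
    fix x assume cx: "is_cocycle \<alpha> 0 1 (- \<alpha>) x"
    let ?c = "poly (dA x) (- \<alpha>)"
    let ?y = "data_sub x (data_smult ?c (std_data 1))"
    have "Bc \<alpha> 0 1 ?y" using cx std_Bc Bc_sub Bc_smult cocycle_iff by metis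
    moreover have "Dc \<alpha> 0 1 (- \<alpha>) ?y" using cx std_Dc[OF ag] Dc_sub Dc_smult cocycle_iff by metis
    moreover have "poly (dA ?y) (- \<alpha>) = 0" by (simp add: dA_sub dA_smult std_data_def)
    ultimately show "is_coboundary \<alpha> 0 1 (- \<alpha>) ?y"
      unfolding is_coboundary_def using cocycle_suff lemT by blast
  qed
  show "\<forall>a0. a0 \<noteq> 0 \<longrightarrow> is_cocycle \<alpha> 0 1 (- \<alpha>) (std_data a0) \<and> \<not> is_trivial \<alpha> 0 1 (- \<alpha>) (std_data a0)"
    using std_cocycle[OF ag] std_nontriv by blast
  show "\<forall>x. is_cocycle \<alpha> 0 1 (- \<alpha>) x \<and> \<not> is_trivial \<alpha> 0 1 (- \<alpha>) x \<longrightarrow>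
                (\<exists>a0. a0 \<noteq> 0 \<and> is_coboundary \<alpha> 0 1 (- \<alpha>) (data_sub x (std_data a0)))"
  proof (intro allI impI)
    fix x assume "is_cocycle \<alpha> 0 1 (- \<alpha>) x \<and> \<not> is_trivial \<alpha> 0 1 (- \<alpha>) x"
    then have cx: "is_cocycle \<alpha> 0 1 (- \<alpha>) x" and nt: "\<not> is_trivial \<alpha> 0 1 (- \<alpha>) x" by auto
    let ?c = "poly (dA x) (- \<alpha>)"
    have Dx: "Dc \<alpha> 0 1 (- \<alpha>) x" using cx cocycle_nec by blast
    have nz: "?c \<noteq> 0" using lemT[OF Dx] nt by blast
    let ?y = "data_sub x (std_data ?c)"
    have "Bc \<alpha> 0 1 ?y" using cx std_Bc Bc_sub cocycle_iff by metis
    moreover have "Dc \<alpha> 0 1 (- \<alpha>) ?y" using Dx std_Dc[OF ag] Dc_sub by metis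
    moreover have "poly (dA ?y) (- \<alpha>) = 0" by (simp add: dA_sub std_data_def)
    ultimately have "is_coboundary \<alpha> 0 1 (- \<alpha>) ?y"
      unfolding is_coboundary_def using cocycle_suff lemT by blast
    with nz show "\<exists>a0. a0 \<noteq> 0 \<and> is_coboundary \<alpha> 0 1 (- \<alpha>) (data_sub x (std_data a0))" by blast
  qed
qed

end
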